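(* Assume the setting in the context (in particular Assumption (A)). Let $\rho>0$, $z_0\in V_f(\rho)$ and $\epsilon>0$, run Algorithm $\mathcal{A}_*$ from $z_0$ with accuracy $\epsilon$, and let $$D:=\left\lceil5+\frac{1}{\ln15}\ln\left(1+\frac{f(z_0)-f^*}{\epsilon}\right)\right\rceil.$$ If $j_{out}\geq D$, then $m_{\ell+1}\leq\frac{1}{\sqrt{15}}m_{\ell+1+D}$ for all $\ell\in\{0,1,\dots,j_{out}-D\}$.
   Context: Let $f:\mathbb{R}^n\to(-\infty,\infty]$ be a proper closed convex function such that the problem $f^*=\min_{x\in\mathbb{R}^n}f(x)$ is solvable. Let $\Omega_f=\{x: f(x)=f^*\}$, fix a norm $\|\cdot\|$ on $\mathbb{R}^n$ with dual norm $\|y\|_*=\sup\{y^Tz:\|z\|\leq 1\}$, and for $x\in\mathbb{R}^n$ let $\bar x=\arg\min_{z\in\Omega_f}\|x-z\|$. For $\rho\geq0$ let $V_f(\rho)=\{x: f(x)-f^*\leq\rho\}$. Let $\mathcal{A}$ be an iterative algorithm: for $x_0\in\mathrm{dom} f$ and integer $k\geq1$, $\mathcal{A}(x_0,k)$ denotes its $k$-th iterate started from $x_0$ (and $\mathcal{A}(x_0,0)=x_0$). Assumption (A): (i) for every $\rho>0$ there is $\mu_\rho>0$ with $f(x_0)-f^*\geq\frac{\mu_\rho}{2}\|x_0-\bar x_0\|^2$ for all $x_0\in V_f(\rho)$; (ii) there exist $a_f>0$, $L_f>0$ and $g:\mathbb{R}^n\to\mathbb{R}^n$ with $g(x)=0\iff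 x\in\Omega_f$ such that for every $x_0\in\mathrm{dom} f$: $f(\mathcal{A}(x_0,1))\leq f(x_0)-\frac{1}{2L_f}\|g(x_0)\|_*^2$ and $f(\mathcal{A}(x_0,k))-f^*\leq\frac{a_f}{(k+1)^2}\|x_0-\bar x_0\|^2$ for all $k\geq1$; (iii) $\bar n_\rho:=\max\{\frac12,\sqrt{2a_f/\mu_\rho}\}$. Procedure $\mathcal{A}_d(r,n)$ (input $r\in\mathrm{dom} f$, $n\in\mathbb{R}$): set $x_0=r$, $k=0$. Repeat: $k\gets k+1$; set $x_k=\mathcal{A}(x_0,k)$ if $f(\mathcal{A}(x_0,k))\leq f(x_{k-1})$, and $x_k=x_{k-1}$ otherwise; $\ell=\lfloor k/2\rfloor$; until $k\geq n$ and $f(x_\ell)-f(x_k)\leq\frac13(f(x_0)-f(x_\ell))$. Output $z=x_k$, $m=k$. Algorithm $\mathcal{A}_*(z_0)$ (input $z_0\in\mathrm{dom} f$, $\epsilon>0$): set $m_0=1$, $m_{-1}=1$, $j=-1$. Repeat: $j\gets j+1$; $s_j=\sqrt{\frac{f(z_{j-1})-f(z_j)}{f(z_{j-2})-f(z_j)}}$ if $j\geq2$ and $s_j=0$ otherwise; $n_j=\max\{m_j,4s_jm_{j-1}\}$; $[z_{j+1},m_{j+1}]=\mathcal{A}_d(z_j,n_j)$; until $f(z_j)-f(z_{j+1})\leq\epsilon$. Output $z_{out}=z_{j+1}$, $j_{out}=j$. *)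

theory Defs
  imports "HOL-Analysis.Analysis"
begin

(* An extended-real-valued function f : R^n -> (-inf, inf] is represented by its
   effective domain C (= dom f) and a real-valued function f that is meaningful on C. *)

definition is_norm :: "('a::euclidean_space \<Rightarrow> real) \<Rightarrow> bool" where
  "is_norm N \<longleftrightarrow> (\<forall>x y. N (x + y) \<le> N x + N y) \<and> (\<forall>c x. N (c *\<^sub>R x) = \<bar>c\<bar> * N x)
                   \<and> (\<forall>x. N x = 0 \<longleftrightarrow> x = 0)"

definition dual_norm :: "('a::euclidean_space \<Rightarrow> real) \<Rightarrow> 'a \<Rightarrow> real" where
  "dual_norm N y = Sup {y \<bullet> z | z. N z \<le> 1}"

definition proper_closed_convex :: "'a::euclidean_space set \<Rightarrow> ('a \<Rightarrow> real) \<Rightarrow> bool" where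
  "proper_closed_convex C f \<longleftrightarrow> C \<noteq> {} \<and> convex C \<and> convex_on C f
      \<and> closed {(x, t). x \<in> C \<and> f x \<le> t}"

definition solset :: "'a set \<Rightarrow> ('a \<Rightarrow> real) \<Rightarrow> real \<Rightarrow> 'a set" where
  "solset C f fstar = {x \<in> C. f x = fstar}"

definition sublevel :: "'a set \<Rightarrow> ('a \<Rightarrow> real) \<Rightarrow> real \<Rightarrow> real \<Rightarrow> 'a set" where
  "sublevel C f fstar \<rho> = {x \<in> C. f x - fstar \<le> \<rho>}"

(* ||x - xbar|| = distance (in the norm N) from x to Omega_f *)
definition ndist :: "('a::euclidean_space \<Rightarrow> real) \<Rightarrow> 'a set \<Rightarrow> 'a \<Rightarrow> real" where
  "ndist N S x = Inf {N (x - z) | z. z \<in> S}"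

definition assumption_A ::
  "'a::euclidean_space set \<Rightarrow> ('a \<Rightarrow> real) \<Rightarrow> real \<Rightarrow> ('a \<Rightarrow> real) \<Rightarrow> ('a \<Rightarrow> nat \<Rightarrow> 'a) \<Rightarrow> bool" where
  "assumption_A C f fstar N A \<longleftrightarrow>
     (\<forall>\<rho>>0. \<exists>\<mu>>0. \<forall>x0 \<in> sublevel C f fstar \<rho>.
         f x0 - fstar \<ge> \<mu> / 2 * (ndist N (solset C f fstar) x0)\<^sup>2)
   \<and> (\<exists>af>0. \<exists>Lf>0. \<exists>g::'a \<Rightarrow> 'a. (\<forall>x. g x = 0 \<longleftrightarrow> x \<in> solset C f fstar) \<and>
        (\<forall>x0 \<in> C. A x0 1 \<in> C \<and> f (A x0 1) \<le> f x0 - 1 / (2 * Lf) * (dual_norm N (g x0))\<^sup>2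
                \<and> (\<forall>k\<ge>1. A x0 k \<in> C \<and>
                      f (A x0 k) - fstar \<le> af / (real k + 1)\<^sup>2 * (ndist N (solset C f fstar) x0)\<^sup>2)))"

fun Ad_x :: "('a \<Rightarrow> nat \<Rightarrow> 'a) \<Rightarrow> ('a \<Rightarrow> real) \<Rightarrow> 'a \<Rightarrow> nat \<Rightarrow> 'a" where
  "Ad_x A f r 0 = r"
| "Ad_x A f r (Suc k) =
     (if f (A r (Suc k)) \<le> f (Ad_x A f r k) then A r (Suc k) else Ad_x A f r k)"

definition Ad_m :: "('a \<Rightarrow> nat \<Rightarrow> 'a) \<Rightarrow> ('a \<Rightarrow> real) \<Rightarrow> 'a \<Rightarrow> real \<Rightarrow> nat" where
  "Ad_m A f r n = (LEAST k. k \<ge> 1 \<and> real k \<ge> n \<and>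
       f (Ad_x A f r (k div 2)) - f (Ad_x A f r k) \<le> (f r - f (Ad_x A f r (k div 2))) / 3)"

definition Ad :: "('a \<Rightarrow> nat \<Rightarrow> 'a) \<Rightarrow> ('a \<Rightarrow> real) \<Rightarrow> 'a \<Rightarrow> real \<Rightarrow> 'a \<times> nat" where
  "Ad A f r n = (Ad_x A f r (Ad_m A f r n), Ad_m A f r n)"

(* Algorithm A_*: Astar A f z0 j = (z_j, m_j); for j = 0 the value m_{j-1} = m_{-1} = 1
   coincides with m_0 = 1, so natural-number subtraction j - 1 is harmless. *)
fun Astar :: "('a \<Rightarrow> nat \<Rightarrow> 'a) \<Rightarrow> ('a \<Rightarrow> real) \<Rightarrow> 'a \<Rightarrow> nat \<Rightarrow> 'a \<times> nat" where
  "Astar A f z0 0 = (z0, 1)"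
| "Astar A f z0 (Suc j) =
     (let zj = fst (Astar A f z0 j);
          mj = snd (Astar A f z0 j);
          mj1 = snd (Astar A f z0 (j - 1));
          s = (if j \<ge> 2 then
                 sqrt ((f (fst (Astar A f z0 (j - 1))) - f zj) / (f (fst (Astar A f z0 (j - 2))) - f zj))
               else 0);
          n = max (real mj) (4 * s * real mj1)
      in Ad A f zj n)"

definition Astar_jout :: "('a \<Rightarrow> nat \<Rightarrow> 'a) \<Rightarrow> ('a \<Rightarrow> real) \<Rightarrow> 'a \<Rightarrow> real \<Rightarrow> nat" where
  "Astar_jout A f z0 \<epsilon> =
     (LEAST j. f (fst (Astar A f z0 j)) - f (fst (Astar A f z0 (Suc j))) \<le> \<epsilon>)"

end

theory Submission
  imports Defs
begin
lemma key:
  fixes d0 d1 a b :: real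
  assumes "d0 > 0" "d1 > 0" "4 * sqrt (d1/(d0+d1)) * a \<le> b" "1 \<le> a" "a \<le> b" "b^2 \<le> 15 * a^2"
  shows "15 * d1 * a^4 \<le> b^4 * d0"
proof -
  have s: "sqrt (d1/(d0+d1)) ^ 2 = d1/(d0+d1)" using assms by simp
  have "(4 * sqrt (d1/(d0+d1)) * a)^2 \<le> b^2"
    using assms by (intro power_mono) auto
  hence "16 * (d1/(d0+d1)) * a^2 \<le> b^2" by (simp add: power_mult_distrib s)
  hence h1: "16 * d1 * a^2 \<le> b^2 * (d0+d1)" using assms by (simp add: field_simps)
  have h2: "15 * a^4 \<le> b^2 * (16*a^2 - b^2)"
  proof -
    have "0 \<le> (b^2 - a^2) * (15*a^2 - b^2)"
      using assms by (intro mult_nonneg_nonneg) (auto intro: power_mono)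
    thus ?thesis by (simp add: algebra_simps power2_eq_square power4_eq_xxxx)
  qed
  have "15 * d1 * a^4 \<le> d1 * (b^2 * (16*a^2 - b^2))"
    using h2 assms by (simp add: mult.commute)
  also have "\<dots> = b^2 * (d1 * (16*a^2 - b^2))" by (simp add: algebra_simps)
  also have "\<dots> \<le> b^2 * (b^2 * d0)"
    using h1 by (intro mult_left_mono) (auto simp: algebra_simps)
  also have "\<dots> = b^4 * d0" by (simp add: power2_eq_square power4_eq_xxxx)
  finally show ?thesis .
qed

lemma Adx_C:
  assumes rC: "r \<in> C" and AC: "\<forall>x\<in>C. \<forall>k\<ge>1. A x k \<in> C"
  shows "Ad_x A f r k \<in> C"
  by (induction k) (use rC AC in auto)

lemma Adx_le_r: "f (Ad_x A f r k) \<le> f r"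
  by (induction k) auto

lemma Adx_le_A: "k \<ge> 1 \<Longrightarrow> f (Ad_x A f r k) \<le> f (A r k)"
  by (cases k) auto

lemma Adm_ex:
  fixes f :: "'a \<Rightarrow> real"
  assumes rC: "r \<in> C" and AC: "\<forall>x\<in>C. \<forall>k\<ge>1. A x k \<in> C"
    and minC: "\<forall>x\<in>C. fstar \<le> f x" and K: "K \<ge> 0"
    and rate: "\<forall>k\<ge>1. f (A r k) - fstar \<le> K / (real k + 1)^2"
  shows "\<exists>k. k \<ge> 1 \<and> real k \<ge> n \<and>
       f (Ad_x A f r (k div 2)) - f (Ad_x A f r k) \<le> (f r - f (Ad_x A f r (k div 2))) / 3"
proof -
  have fr: "fstar \<le> f r" using minC rC by blast
  have lb: "fstar \<le> f (Ad_x A f r i)" for i using Adx_C[OF rC AC] minC by blast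
  show ?thesis
  proof (cases "f r = fstar")
    case True
    define k where "k = max 1 (nat \<lceil>n\<rceil>)"
    have k1: "k \<ge> 1" unfolding k_def by simp
    have kn1: "real (nat \<lceil>n\<rceil>) \<ge> n" by (rule real_nat_ceiling_ge)
    have kn2: "real k \<ge> real (nat \<lceil>n\<rceil>)" unfolding k_def by (simp del: of_nat_max)
    have kn: "real k \<ge> n" using kn1 kn2 by linarith
    have eq: "f (Ad_x A f r i) = fstar" for i using lb[of i] Adx_le_r[of f A r i] True by linarith
    show ?thesis using k1 kn by (intro exI[of _ k]) (simp add: eq True)
  next
    case False
    define g0 where "g0 = f r - fstar"
    have g0: "g0 > 0" using False fr unfolding g0_def by simp
    obtain t :: nat where t: "real t \<ge> max 1 (max n (4*K/g0))" using real_arch_simple by blast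
    have t1: "t \<ge> 1" using t by simp
    have "4*K/g0 \<le> real t" using t by simp
    hence "4*K \<le> g0 * real t" using g0 by (simp add: field_simps)
    also have "\<dots> \<le> g0 * (real t + 1)^2"
    proof -
      have "0 \<le> real t * real t" by simp
      hence "real t \<le> (real t + 1)^2" by (simp add: power2_eq_square algebra_simps)
      thus ?thesis using g0 by (intro mult_left_mono) auto
    qed
    finally have "K / (real t + 1)^2 \<le> g0/4" by (simp add: field_simps)
    moreover have "f (Ad_x A f r t) \<le> f (A r t)" by (rule Adx_le_A[OF t1])
    moreover have "f (A r t) - fstar \<le> K / (real t + 1)^2" using rate t1 by blast
    ultimately have a: "f (Ad_x A f r t) - fstar \<le> g0/4" by linarith
    have b: "fstar \<le> f (Ad_x A f r (2*t))" by (rule lb)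
    have dv: "(2*t) div 2 = t" by simp
    have tn: "real (2*t) \<ge> n" using t by simp
    have "f (Ad_x A f r ((2*t) div 2)) - f (Ad_x A f r (2*t)) \<le> (f r - f (Ad_x A f r ((2*t) div 2))) / 3"
    proof -
      have "g0/4 \<le> (f r - f (Ad_x A f r t)) / 3" using a g0_def by (simp add: field_simps)
      thus ?thesis unfolding dv using a b by linarith
    qed
    then show ?thesis using t1 tn by (intro exI[of _ "2*t"]) simp
  qed
qed

lemma Adm_ge:
  fixes f :: "'a \<Rightarrow> real"
  assumes rC: "r \<in> C" and AC: "\<forall>x\<in>C. \<forall>k\<ge>1. A x k \<in> C"
    and minC: "\<forall>x\<in>C. fstar \<le> f x" and K: "K \<ge> 0"
    and rate: "\<forall>k\<ge>1. f (A r k) - fstar \<le> K / (real k + 1)^2"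
  shows "real (Ad_m A f r n) \<ge> n \<and> Ad_m A f r n \<ge> 1"
  using LeastI_ex[OF Adm_ex[OF rC AC minC K rate, of n]] unfolding Ad_m_def by blast


theorem lemma1:
  fixes C :: "'a::euclidean_space set" and f :: "'a \<Rightarrow> real" and fstar :: real
    and N :: "'a \<Rightarrow> real" and A :: "'a \<Rightarrow> nat \<Rightarrow> 'a"
    and \<rho> \<epsilon> :: real and z0 :: 'a
  assumes pcc: "proper_closed_convex C f"
    and solv: "\<exists>x\<in>C. f x = fstar" and minimal: "\<forall>x\<in>C. fstar \<le> f x"
    and norm: "is_norm N"
    and A0: "\<forall>x. A x 0 = x"
    and asmA: "assumption_A C f fstar N A"
    and rho: "\<rho> > 0" and z0: "z0 \<in> sublevel C f fstar \<rho>" and eps: "\<epsilon> > 0"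
  defines "D \<equiv> \<lceil>5 + ln (1 + (f z0 - fstar) / \<epsilon>) / ln 15\<rceil>"
  shows "int (Astar_jout A f z0 \<epsilon>) \<ge> D \<longrightarrow>
    (\<forall>l::nat. int l \<le> int (Astar_jout A f z0 \<epsilon>) - D \<longrightarrow>
       real (snd (Astar A f z0 (l + 1))) \<le> real (snd (Astar A f z0 (l + 1 + nat D))) / sqrt 15)"
proof (intro impI allI)
  fix l :: nat
  assume hj: "int (Astar_jout A f z0 \<epsilon>) \<ge> D" and hl: "int l \<le> int (Astar_jout A f z0 \<epsilon>) - D"
  obtain af where af: "af > 0" and H: "\<forall>x0\<in>C. \<forall>k\<ge>1. A x0 k \<in> C \<and>
      f (A x0 k) - fstar \<le> af / (real k + 1)^2 * (ndist N (solset C f fstar) x0)^2"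
    using asmA unfolding assumption_A_def by metis
  have AC: "\<forall>x\<in>C. \<forall>k\<ge>1. A x k \<in> C" using H by blast
  have rate: "\<forall>k\<ge>1. f (A x k) - fstar \<le> (af * (ndist N (solset C f fstar) x)^2) / (real k + 1)^2"
    if "x \<in> C" for x using H that by (simp add: field_simps)
  have Kpos: "af * (ndist N (solset C f fstar) x)^2 \<ge> 0" for x using af by simp
  have z0C: "z0 \<in> C" using z0 unfolding sublevel_def by simp
  define z where "z j = fst (Astar A f z0 j)" for j
  define m where "m j = snd (Astar A f z0 j)" for j
  define s where "s j = (if 2 \<le> j then sqrt ((f (z (j-1)) - f (z j)) / (f (z (j-2)) - f (z j))) else 0)" for j
  define nn where "nn j = max (real (m j)) (4 * s j * real (m (j-1)))" for j
  have step: "z (Suc j) = Ad_x A f (z j) (Ad_m A f (z j) (nn j)) \<and> m (Suc j) = Ad_m A f (z j) (nn j)" for j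
    by (simp add: z_def m_def s_def nn_def Let_def Ad_def)
  have zC: "z j \<in> C" for j
  proof (induction j)
    case 0 then show ?case using z0C by (simp add: z_def)
  next
    case (Suc j) then show ?case using step[of j] Adx_C[OF _ AC] by metis
  qed
  have flb: "fstar \<le> f (z j)" for j using zC minimal by blast
  have mge: "real (m (Suc j)) \<ge> nn j \<and> m (Suc j) \<ge> 1" for j
    using step[of j] Adm_ge[OF zC[of j] AC minimal Kpos rate[OF zC[of j]], of "nn j"] by simp
  have m0: "m 0 = 1" by (simp add: m_def)
  have mpos: "m j \<ge> 1" for j using mge m0 by (cases j) auto
  have msuc: "m j \<le> m (Suc j)" for j using mge[of j] unfolding nn_def by simp
  have mmono: "i \<le> j \<Longrightarrow> m i \<le> m j" for i j using msuc by (rule lift_Suc_mono_le)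
  have fzsuc: "f (z (Suc j)) \<le> f (z j)" for j using step[of j] Adx_le_r by metis
  have fz0: "f (z j) \<le> f z0" for j
  proof (induction j)
    case 0 then show ?case by (simp add: z_def)
  next
    case (Suc j) then show ?case using fzsuc[of j] by linarith
  qed
  define \<delta> where "\<delta> i = f (z i) - f (z (Suc i))" for i
  define jout where "jout = Astar_jout A f z0 \<epsilon>"
  have jout_eq: "jout = (LEAST j. \<delta> j \<le> \<epsilon>)"
    unfolding jout_def Astar_jout_def \<delta>_def z_def by simp
  have \<delta>big: "i < jout \<Longrightarrow> \<delta> i > \<epsilon>" for i
    using not_less_Least[of i "\<lambda>j. \<delta> j \<le> \<epsilon>"] jout_eq by auto
  define F where "F = f z0 - fstar"
  have \<delta>F: "\<delta> i \<le> F" for i using fz0[of i] flb[of "Suc i"] unfolding \<delta>_def F_def by linarith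
  have F0: "F \<ge> 0" using flb[of 0] unfolding F_def z_def by simp
  have mkey: "4 * sqrt (\<delta> (j-1) / (\<delta> (j-2) + \<delta> (j-1))) * real (m (j-1)) \<le> real (m (Suc j))"
    if "2 \<le> j" for j
  proof -
    define k where "k = j - 2"
    have k: "j = k + 2" using that unfolding k_def by simp
    have "s j = sqrt (\<delta> (j-1) / (\<delta> (j-2) + \<delta> (j-1)))"
      using that unfolding k by (simp add: s_def \<delta>_def)
    thus ?thesis using mge[of j] unfolding nn_def by simp
  qed
  define d where "d = nat D"
  have D5: "5 \<le> D"
  proof -
    have "0 \<le> ln (1 + F / \<epsilon>)" using F0 eps by simp
    hence "0 \<le> ln (1 + F / \<epsilon>) / ln 15" by simp
    thus ?thesis unfolding D_def F_def by (simp add: le_ceiling_iff)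
  qed
  have dD: "int d = D" using D5 unfolding d_def by simp
  have d5: "d \<ge> 5" using D5 dD by linarith
  have pow15: "1 + F / \<epsilon> \<le> 15 ^ (d - 5)"
  proof -
    have "5 + ln (1 + F / \<epsilon>) / ln 15 \<le> real_of_int D"
      unfolding D_def F_def by (rule le_of_int_ceiling)
    also have "real_of_int D = real d" using dD by (metis of_int_of_nat_eq)
    finally have "ln (1 + F / \<epsilon>) / ln 15 \<le> real (d - 5)" using d5 by (simp add: of_nat_diff)
    hence "ln (1 + F / \<epsilon>) \<le> real (d - 5) * ln 15" by (simp add: divide_le_eq)
    also have "\<dots> = ln (15 ^ (d - 5))" by (simp add: ln_realpow)
    finally have lnle: "ln (1 + F / \<epsilon>) \<le> ln (15 ^ (d - 5))" .
    have "0 \<le> F / \<epsilon>" using F0 eps by simp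
    hence pos: "0 < 1 + F / \<epsilon>" by linarith
    show ?thesis using lnle ln_le_cancel_iff[OF pos, of "15 ^ (d - 5)"] by simp
  qed
  have ld: "l + d \<le> jout" using hl dD unfolding jout_def by linarith
  show "real (snd (Astar A f z0 (l + 1))) \<le> real (snd (Astar A f z0 (l + 1 + nat D))) / sqrt 15"
  proof (rule ccontr)
    assume neg: "\<not> ?thesis"
    define Ms where "Ms = real (m (l+1))"
    define Me where "Me = real (m (l+1+d))"
    have "\<not> Ms \<le> Me / sqrt 15" unfolding Ms_def Me_def m_def d_def using neg .
    hence "Me / sqrt 15 < Ms" by simp
    hence "Me < sqrt 15 * Ms" by (simp add: divide_less_eq mult.commute)
    hence "Me^2 < (sqrt 15 * Ms)^2" unfolding Me_def by (intro power_strict_mono) auto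
    hence MeMs: "Me^2 < 15 * Ms^2" by (simp add: power_mult_distrib)
    have Ms1: "Ms \<ge> 1" using mpos unfolding Ms_def by (simp add: Suc_le_eq)
    have claim: "i \<le> d - 1 \<longrightarrow> 15^i * \<delta> (l+i) * (real (m (l+2)) * real (m (l+1)))^4
                 \<le> \<delta> l * (real (m (l+i+2)) * real (m (l+i+1)))^4" for i
    proof (induction i)
      case 0 then show ?case by simp
    next
      case (Suc i)
      show ?case
      proof
        assume hi: "Suc i \<le> d - 1"
        let ?a = "real (m (l+i+1))" and ?b = "real (m (l+i+3))" and ?c = "real (m (l+i+2))"
        let ?P = "(real (m (l+2)) * real (m (l+1)))^4"
        have IH: "15^i * \<delta> (l+i) * ?P \<le> \<delta> l * (?c * ?a)^4" using Suc hi by simp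
        have li: "l+i+1 < jout" using hi ld d5 by arith
        have "\<delta> (l+i) > \<epsilon>" using li by (intro \<delta>big) simp
        hence d0: "\<delta> (l+i) > 0" using eps by linarith
        have "\<delta> (l+i+1) > \<epsilon>" using li by (intro \<delta>big) simp
        hence d1: "\<delta> (l+i+1) > 0" using eps by linarith
        have mk: "4 * sqrt (\<delta> (l+i+1) / (\<delta> (l+i) + \<delta> (l+i+1))) * ?a \<le> ?b"
          using mkey[of "l+i+2"] by (simp add: numeral_3_eq_3 add.assoc)
        have a1: "1 \<le> ?a" using mpos by (simp add: Suc_le_eq)
        have ab: "?a \<le> ?b" using mmono[of "l+i+1" "l+i+3"] by simp
        have bMe: "?b \<le> Me" using mmono[of "l+i+3" "l+1+d"] hi unfolding Me_def by simp
        have Msa: "Ms \<le> ?a" using mmono[of "l+1" "l+i+1"] unfolding Ms_def by simp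
        have "?b^2 \<le> Me^2" using bMe a1 ab by (intro power_mono) auto
        also have "\<dots> \<le> 15 * Ms^2" using MeMs by simp
        also have "\<dots> \<le> 15 * ?a^2" using Msa Ms1 by (intro mult_left_mono power_mono) auto
        finally have b15: "?b^2 \<le> 15 * ?a^2" .
        have K: "15 * \<delta> (l+i+1) * ?a^4 \<le> ?b^4 * \<delta> (l+i)"
          by (rule key[OF d0 d1 mk a1 ab b15])
        have Pnn: "?P \<ge> 0" by simp
        have "15^(Suc i) * \<delta> (l+i+1) * ?P * ?a^4 = (15 * \<delta> (l+i+1) * ?a^4) * (15^i * ?P)"
          by (simp add: algebra_simps)
        also have "\<dots> \<le> (?b^4 * \<delta> (l+i)) * (15^i * ?P)"
          using K Pnn by (intro mult_right_mono) auto
        also have "\<dots> = ?b^4 * (15^i * \<delta> (l+i) * ?P)" by (simp add: algebra_simps)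
        also have "\<dots> \<le> ?b^4 * (\<delta> l * (?c * ?a)^4)"
          using IH by (intro mult_left_mono) auto
        also have "\<dots> = (\<delta> l * (?b * ?c)^4) * ?a^4" by (simp add: algebra_simps power_mult_distrib)
        finally have "15^(Suc i) * \<delta> (l+i+1) * ?P * ?a^4 \<le> (\<delta> l * (?b * ?c)^4) * ?a^4" .
        hence "15^(Suc i) * \<delta> (l+i+1) * ?P \<le> \<delta> l * (?b * ?c)^4"
          using a1 by (simp add: mult_le_cancel_right)
        thus "15 ^ Suc i * \<delta> (l + Suc i) * ?P \<le> \<delta> l * (real (m (l + Suc i + 2)) * real (m (l + Suc i + 1))) ^ 4"
          by (simp add: numeral_3_eq_3 add.assoc)
      qed
    qed
    have C1: "15^(d-1) * \<delta> (l+(d-1)) * (real (m (l+2)) * real (m (l+1)))^4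
                 \<le> \<delta> l * (real (m (l+(d-1)+2)) * real (m (l+(d-1)+1)))^4" using claim[of "d-1"] by simp
    have e1: "l+(d-1)+2 = l+1+d" "l+(d-1)+1 = l+d" using d5 by auto
    have last: "\<delta> (l+(d-1)) > \<epsilon>" using \<delta>big ld d5 by simp
    have dl: "\<delta> l > 0" using \<delta>big[of l] ld d5 eps by simp
    have m2: "Ms \<le> real (m (l+2))" using mmono[of "l+1" "l+2"] unfolding Ms_def by simp
    have md: "real (m (l+d)) \<le> Me" using mmono[of "l+d" "l+1+d"] unfolding Me_def by simp
    have "Ms^8 = (Ms * Ms)^4" by (simp add: power_mult_distrib flip: power_add)
    also have "\<dots> \<le> (real (m (l+2)) * real (m (l+1)))^4"
      using m2 Ms1 unfolding Ms_def by (intro power_mono mult_mono) auto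
    finally have P8: "Ms^8 \<le> (real (m (l+2)) * real (m (l+1)))^4" .
    have "(real (m (l+1+d)) * real (m (l+d)))^4 \<le> (Me * Me)^4"
      using md unfolding Me_def by (intro power_mono mult_mono) auto
    also have "\<dots> = (Me^2)^4" by (simp add: power2_eq_square)
    also have "\<dots> < (15 * Ms^2)^4" using MeMs unfolding Me_def by (intro power_strict_mono) auto
    also have "\<dots> = 15^4 * Ms^8" by (simp add: power_mult_distrib flip: power_mult)
    finally have Q: "(real (m (l+1+d)) * real (m (l+d)))^4 < 15^4 * Ms^8" .
    have Ms8: "Ms^8 > 0" using Ms1 by simp
    have "15^(d-1) * \<epsilon> * Ms^8 \<le> 15^(d-1) * \<delta> (l+(d-1)) * Ms^8"
      using last Ms8 by (intro mult_right_mono mult_left_mono) auto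
    also have "\<dots> \<le> 15^(d-1) * \<delta> (l+(d-1)) * (real (m (l+2)) * real (m (l+1)))^4"
      using P8 last eps by (intro mult_left_mono) auto
    also have "\<dots> \<le> \<delta> l * (real (m (l+1+d)) * real (m (l+d)))^4" using C1 e1 by simp
    also have "\<dots> < \<delta> l * (15^4 * Ms^8)" using Q dl by (intro mult_strict_left_mono) auto
    finally have "15^(d-1) * \<epsilon> * Ms^8 < (15^4 * \<delta> l) * Ms^8" by (simp add: algebra_simps)
    hence lt: "15^(d-1) * \<epsilon> < 15^4 * \<delta> l" using Ms8 by (simp add: mult_less_cancel_right)
    have dd: "d - 1 = 4 + (d - 5)" using d5 by simp
    have "(15::real)^(d-1) = 15^4 * 15^(d-5)" unfolding dd by (rule power_add)
    hence "15^(d-5) * \<epsilon> < \<delta> l" using lt by simp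
    also have "\<dots> \<le> F" by (rule \<delta>F)
    finally have "15^(d-5) * \<epsilon> < F" .
    moreover have "(1 + F / \<epsilon>) * \<epsilon> \<le> 15^(d-5) * \<epsilon>" using pow15 eps by (intro mult_right_mono) auto
    moreover have "(1 + F / \<epsilon>) * \<epsilon> = \<epsilon> + F" using eps by (simp add: field_simps)
    ultimately show False using eps by linarith
  qed
qed

end
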